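(* Let $q\ge2$ be a prime power and let $f\in\mathbb{F}_q[x]$ be nonzero. If $m\ge 1$ is an integer with $q^m\ge \deg f$, then $$E(f)\le \prod_{\deg p\le m}\left(1+\frac{1}{|p|}\right),$$ where the product runs over all monic irreducible polynomials $p\in\mathbb{F}_q[x]$ of degree at most $m$.
   Context: For $f\in\mathbb{F}_q[x]$, $|f|=q^{\deg f}$. The letter $p$ always denotes a monic irreducible polynomial in $\mathbb{F}_q[x]$, and $E(f)=\prod_{p\mid f}\left(1+\frac{1}{|p|}\right)$, the product over monic irreducible divisors $p$ of $f$. *)

theory Defs
  imports "HOL-Computational_Algebra.Computational_Algebra"
begin

definition poly_norm :: "'a::{field,finite} poly \<Rightarrow> real" where
  "poly_norm f = real (card (UNIV :: 'a set)) ^ degree f"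

definition E_fun :: "'a::{field,finite} poly \<Rightarrow> real" where
  "E_fun f = (\<Prod>p\<in>{p. lead_coeff p = 1 \<and> irreducible p \<and> p dvd f}. 1 + 1 / poly_norm p)"

end

theory Submission
  imports Defs
begin

lemma ff_power_card:
  fixes x :: "'a :: {field,finite}"
  shows "x ^ card (UNIV :: 'a set) = x"
proof (cases "x = 0")
  case False
  have "x * (\<Prod>y\<in>UNIV-{0}. x * y) = x * x ^ (card (UNIV :: 'a set) - 1) * \<Prod>(UNIV-{0})"
    by (simp add: prod.distrib mult_ac)
  also have "x * x ^ (card (UNIV :: 'a set) - 1) = x ^ Suc (card (UNIV :: 'a set) - 1)"
    by (subst power_Suc) auto
  also have "Suc (card (UNIV :: 'a set) - 1) = card (UNIV :: 'a set)"
    using finite_UNIV_card_ge_0[where ?'a = 'a] by simp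
  also have "(\<Prod>y\<in>UNIV-{0}. x * y) = (\<Prod>y\<in>UNIV-{0}. y)"
    by (rule prod.reindex_bij_witness[of _ "\<lambda>y. y / x" "\<lambda>y. x * y"]) (use False in auto)
  finally show ?thesis
    by simp
qed (use finite_UNIV_card_ge_0[where ?'a = 'a] in auto)

lemma ff_choose_zero:
  assumes "0 < k" "k < card (UNIV :: 'a::{field,finite} set)"
  shows "of_nat (card (UNIV :: 'a set) choose k) = (0::'a)"
proof -
  define q where "q = card (UNIV :: 'a set)"
  have q0: "q > 0" unfolding q_def by (simp add: finite_UNIV_card_ge_0)
  define P :: "'a poly" where "P = [:1,1:]^q - [:0,1:]^q - 1"
  have roots: "poly P a = 0" for a
    unfolding P_def using ff_power_card[of "1+a"] ff_power_card[of a]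
    by (simp add: q_def algebra_simps)
  have cP: "coeff P i = (if 0 < i \<and> i < q then of_nat (q choose i) else 0)" for i
  proof -
    have c1: "coeff ([:1,1:]^q) i = (if i \<le> q then of_nat (q choose i) else (0::'a))"
    proof (cases "i \<le> q")
      case True thus ?thesis using coeff_linear_poly_power[OF True, of "1::'a" 1] by simp
    next
      case False
      have "degree ([:1,1:]^q :: 'a poly) \<le> q" using degree_power_le[of "[:1,1::'a:]" q] by simp
      thus ?thesis using False by (simp add: coeff_eq_0)
    qed
    have c2: "coeff ([:0,1:]^q :: 'a poly) i = (if i = q then 1 else 0)"
    proof -
      have "[:0,1:]^q = (monom 1 q :: 'a poly)" by (simp add: monom_altdef)
      thus ?thesis by (simp add: coeff_monom)
    qed
    show ?thesis unfolding P_def using c1 c2 q0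
      by (auto simp: coeff_1 split: if_splits)
  qed
  have "P = 0"
  proof (rule ccontr)
    assume nz: "P \<noteq> 0"
    have "degree P < q"
    proof -
      have "degree P \<le> q - 1" by (rule degree_le) (auto simp: cP)
      thus ?thesis using q0 by linarith
    qed
    moreover have "card {x. poly P x = 0} \<le> degree P" by (rule card_poly_roots_bound[OF nz])
    moreover have "{x. poly P x = 0} = UNIV" using roots by auto
    ultimately show False unfolding q_def by simp
  qed
  hence "coeff P k = 0" by simp
  thus ?thesis using assms cP[of k] by (simp add: q_def)
qed

lemma ff_poly_dream:
  fixes g h :: "'a::{field,finite} poly"
  shows "(g + h) ^ card (UNIV :: 'a set) = g ^ card (UNIV :: 'a set) + h ^ card (UNIV :: 'a set)"
proof -
  define q where "q = card (UNIV :: 'a set)"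
  have q0: "q > 0" unfolding q_def by (simp add: finite_UNIV_card_ge_0)
  have "(g + h) ^ q = (\<Sum>k\<le>q. of_nat (q choose k) * g ^ k * h ^ (q - k))"
    by (rule binomial_ring)
  also have "\<dots> = (\<Sum>k\<in>{0,q}. of_nat (q choose k) * g ^ k * h ^ (q - k))"
  proof (intro sum.mono_neutral_right ballI)
    fix k assume "k \<in> {..q} - {0, q}"
    hence k: "k > 0" "k < q" by auto
    have "of_nat (q choose k) = (0 :: 'a poly)"
      using ff_choose_zero[of k, where 'a='a] k by (simp add: q_def of_nat_poly)
    thus "of_nat (q choose k) * g ^ k * h ^ (q - k) = 0" by simp
  qed auto
  finally show ?thesis using q0 unfolding q_def[symmetric] by (simp add: add_ac)
qed

lemma ff_poly_dream_pow:
  fixes g h :: "'a::{field,finite} poly"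
  shows "(g + h) ^ (card (UNIV :: 'a set) ^ j) = g ^ (card (UNIV :: 'a set) ^ j) + h ^ (card (UNIV :: 'a set) ^ j)"
proof (induction j)
  case (Suc j)
  define q where "q = card (UNIV :: 'a set)"
  have "(g + h) ^ (q ^ Suc j) = ((g + h) ^ (q ^ j)) ^ q"
    by (simp only: power_Suc2 power_mult)
  also have "\<dots> = (g ^ (q ^ j)) ^ q + (h ^ (q ^ j)) ^ q"
    unfolding q_def Suc.IH by (rule ff_poly_dream)
  also have "\<dots> = g ^ (q ^ Suc j) + h ^ (q ^ Suc j)"
    by (simp only: power_Suc2 power_mult)
  finally show ?case unfolding q_def .
qed simp

lemma ff_const_pow:
  fixes c :: "'a::{field,finite}"
  shows "c ^ (card (UNIV :: 'a set) ^ j) = c"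
  by (induction j) (simp_all add: power_mult ff_power_card)

lemma ff_all_congruent:
  fixes p g :: "'a::{field,finite} poly"
  assumes "p dvd [:0,1:] ^ (card (UNIV :: 'a set) ^ j) - [:0,1:]"
  shows "p dvd g ^ (card (UNIV :: 'a set) ^ j) - g"
proof (induction g)
  case 0
  have "card (UNIV :: 'a set) ^ j > 0" by (simp add: finite_UNIV_card_ge_0)
  thus ?case by (simp add: zero_power)
next
  case (pCons a g)
  define N where "N = card (UNIV :: 'a set) ^ j"
  obtain X :: "'a poly" where X: "X = [:0,1:]" by blast
  have e: "pCons a g = [:a:] + X * g" using X by simp
  have c: "[:a:] ^ N = [:a:]" unfolding N_def by (simp add: poly_const_pow ff_const_pow)
  have 1: "(pCons a g) ^ N = [:a:] + X ^ N * g ^ N"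
    unfolding e N_def ff_poly_dream_pow c[unfolded N_def] by (simp add: power_mult_distrib)
  have "(pCons a g) ^ N - pCons a g = (X ^ N) * (g ^ N - g) + g * (X ^ N - X)"
    unfolding 1 by (subst e) (simp add: algebra_simps)
  moreover have "p dvd \<dots>" using pCons.IH assms unfolding N_def X by (intro dvd_add dvd_mult) auto
  ultimately show ?case unfolding N_def by simp
qed

lemma roots_mod_prime:
  fixes P :: "'a::field poly poly" and p :: "'a poly"
  assumes "prime_elem p"
  shows "lead_coeff P = 1 \<Longrightarrow> finite G \<Longrightarrow> (\<forall>g\<in>G. p dvd poly P g) \<Longrightarrow>
     (\<forall>g\<in>G. \<forall>h\<in>G. g \<noteq> h \<longrightarrow> \<not> p dvd (g - h)) \<Longrightarrow> card G \<le> degree P"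
proof (induction "degree P" arbitrary: P G)
  case 0
  then have "P = 1" by (metis degree_0_id one_pCons)
  have "G = {}"
  proof (rule ccontr)
    assume "G \<noteq> {}" then obtain g where "g \<in> G" by blast
    with 0 \<open>P = 1\<close> have "p dvd 1" by auto
    with assms show False by (simp add: prime_elem_def)
  qed
  thus ?case by simp
next
  case (Suc n)
  show ?case
  proof (cases "G = {}")
    case True thus ?thesis by simp
  next
    case False
    then obtain r where r: "r \<in> G" by blast
    define Q where "Q = synthetic_div P r"
    have PQ: "P = [:-r, 1:] * Q + [:poly P r:]" unfolding Q_def by (rule synthetic_div_correct'[symmetric])
    have dQ: "degree Q = n" using Suc(2) unfolding Q_def by (simp add: degree_synthetic_div)
    have Q0: "Q \<noteq> 0" using Suc(2) unfolding Q_def by (simp add: synthetic_div_eq_0_iff)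
    have d1: "degree [:-r, 1:] = 1" by simp
    have dm: "degree ([:-r, 1:] * Q) = Suc n"
    proof -
      have "[:-r, 1:] \<noteq> 0" by simp
      from degree_mult_eq[OF this Q0] show ?thesis using d1 dQ by simp
    qed
    have "lead_coeff P = coeff ([:-r, 1:] * Q) (Suc n) + coeff [:poly P r:] (Suc n)"
      using Suc(2) by (subst PQ) (simp only: coeff_add)
    also have "\<dots> = lead_coeff ([:-r, 1:] * Q)" using dm by simp
    also have "\<dots> = lead_coeff Q" by (simp only: lead_coeff_mult) simp
    finally have lQ: "lead_coeff Q = 1" using Suc(3) by simp
    have "card (G - {r}) \<le> degree Q"
    proof (rule Suc(1)[OF dQ[symmetric] lQ])
      show "finite (G - {r})" using Suc(4) by simp
      show "\<forall>g\<in>G - {r}. \<forall>h\<in>G - {r}. g \<noteq> h \<longrightarrow> \<not> p dvd g - h" using Suc(6) by blast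
      show "\<forall>g\<in>G - {r}. p dvd poly Q g"
      proof
        fix g assume g: "g \<in> G - {r}"
        have "poly P g = (g - r) * poly Q g + poly P r"
          by (subst PQ) (simp add: algebra_simps)
        hence "(g - r) * poly Q g = poly P g - poly P r" by simp
        moreover have "p dvd poly P g - poly P r" using Suc(5) g r by (intro dvd_diff) auto
        ultimately have "p dvd (g - r) * poly Q g" by simp
        moreover have "\<not> p dvd (g - r)" using Suc(6) g r by auto
        ultimately show "p dvd poly Q g" using assms prime_elem_dvd_mult_iff by blast
      qed
    qed
    moreover have "card G = Suc (card (G - {r}))" using r Suc(4)
      by (metis card_Suc_Diff1)
    ultimately show ?thesis using dQ Suc(2) by simp
  qed
qed

definition lowp :: "nat \<Rightarrow> 'a::zero poly set" where
  "lowp d = {g. \<forall>i\<ge>d. coeff g i = 0}"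

lemma lowp_Suc: "lowp (Suc d) = (\<lambda>(a, g). pCons a g) ` (UNIV \<times> lowp d)"
proof (intro equalityI subsetI)
  fix h :: "'a poly" assume h: "h \<in> lowp (Suc d)"
  obtain a g where hg: "h = pCons a g" by (cases h)
  have "g \<in> lowp d" unfolding lowp_def
  proof (intro CollectI allI impI)
    fix i assume "d \<le> i"
    hence "Suc d \<le> Suc i" by simp
    hence "coeff h (Suc i) = 0" using h unfolding lowp_def by blast
    thus "coeff g i = 0" unfolding hg by simp
  qed
  thus "h \<in> (\<lambda>(a, g). pCons a g) ` (UNIV \<times> lowp d)" using hg by auto
next
  fix h :: "'a poly" assume "h \<in> (\<lambda>(a, g). pCons a g) ` (UNIV \<times> lowp d)"
  then obtain a g where hg: "h = pCons a g" "g \<in> lowp d" by auto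
  show "h \<in> lowp (Suc d)" unfolding lowp_def
  proof (intro CollectI allI impI)
    fix i assume "Suc d \<le> i"
    then obtain j where "i = Suc j" "d \<le> j" by (cases i) auto
    thus "coeff h i = 0" using hg unfolding lowp_def by auto
  qed
qed

lemma card_lowp: "finite (lowp d :: 'a::{zero,finite} poly set) \<and> card (lowp d :: 'a poly set) = card (UNIV :: 'a set) ^ d"
proof (induction d)
  case 0
  have "lowp 0 = {0 :: 'a poly}" unfolding lowp_def by (auto simp: poly_eq_iff)
  thus ?case by simp
next
  case (Suc d)
  have inj: "inj_on (\<lambda>(a, g). pCons a (g :: 'a poly)) (UNIV \<times> lowp d)"
    by (auto simp: inj_on_def)
  show ?case unfolding lowp_Suc using Suc inj
    by (simp add: card_image card_cartesian_product)
qed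

lemma lowp_diff: "g \<in> lowp d \<Longrightarrow> h \<in> lowp d \<Longrightarrow> (g - h :: 'a::ab_group_add poly) \<in> lowp d"
  unfolding lowp_def by auto

lemma lowp_degree: "g \<in> lowp d \<Longrightarrow> g \<noteq> 0 \<Longrightarrow> degree g < d"
proof (rule ccontr)
  assume "g \<in> lowp d" "g \<noteq> 0" "\<not> degree g < d"
  hence "coeff g (degree g) = 0" unfolding lowp_def by auto
  with \<open>g \<noteq> 0\<close> show False by simp
qed

lemma card_ge2: "card (UNIV :: 'a::field set) \<ge> 2 \<or> infinite (UNIV :: 'a set)"
proof -
  have "{0, 1::'a} \<subseteq> UNIV" by simp
  hence "finite (UNIV :: 'a set) \<Longrightarrow> card {0, 1::'a} \<le> card (UNIV :: 'a set)" by (intro card_mono) auto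
  thus ?thesis by auto
qed

lemma irr_deg_bound:
  fixes p :: "'a::{field,finite} poly"
  assumes irr: "irreducible p" and m: "m \<ge> 1"
    and dv: "p dvd [:0,1:] ^ (card (UNIV :: 'a set) ^ m) - [:0,1:]"
  shows "degree p \<le> m"
proof -
  define q where "q = card (UNIV :: 'a set)"
  define N where "N = q ^ m"
  define d where "d = degree p"
  have q2: "q \<ge> 2" using card_ge2[where 'a='a] unfolding q_def by auto
  have "q ^ 1 \<le> q ^ m" using m q2 by (intro power_increasing) auto
  hence N2: "N \<ge> 2" using q2 unfolding N_def by simp
  define P :: "'a poly poly" where "P = monom 1 N - monom 1 1"
  have cP: "coeff P i = (if i = N then 1 else 0) - (if i = 1 then 1 else 0)" for i
    unfolding P_def by (simp add: coeff_monom)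
  have dP: "degree P = N"
  proof (rule antisym)
    show "degree P \<le> N" by (rule degree_le) (use N2 in \<open>auto simp: cP\<close>)
    show "N \<le> degree P" by (rule le_degree) (use N2 in \<open>auto simp: cP\<close>)
  qed
  have lP: "lead_coeff P = 1" using N2 by (simp add: dP cP)
  have pe: "prime_elem p" by (rule field_poly_irreducible_imp_prime[OF irr])
  have fin: "finite (lowp d :: 'a poly set)" using card_lowp by blast
  have "card (lowp d :: 'a poly set) \<le> degree P"
  proof (rule roots_mod_prime[OF pe lP fin])
    show "\<forall>g\<in>lowp d. p dvd poly P g"
    proof
      fix g :: "'a poly"
      have "p dvd g ^ N - g" using ff_all_congruent[OF dv] unfolding N_def q_def .
      thus "p dvd poly P g" unfolding P_def by (simp add: poly_monom)
    qed
    show "\<forall>g\<in>lowp d. \<forall>h\<in>lowp d. g \<noteq> h \<longrightarrow> \<not> p dvd g - h"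
    proof (intro ballI impI notI)
      fix g h assume g: "g \<in> lowp d" and h: "h \<in> lowp d" and ne: "g \<noteq> h" and pd: "p dvd g - h"
      have "g - h \<noteq> 0" using ne by simp
      hence "degree (g - h) < d" using lowp_degree[OF lowp_diff[OF g h]] by simp
      moreover have "degree p \<le> degree (g - h)"
        using dvd_imp_degree[OF pd] irr \<open>g - h \<noteq> 0\<close> by (metis not_irreducible_zero)
      ultimately show False unfolding d_def by simp
    qed
  qed
  hence "q ^ d \<le> q ^ m" using card_lowp[of d, where 'a='a] dP unfolding q_def N_def by simp
  thus ?thesis unfolding d_def using q2 by (simp add: power_le_imp_le_exp)
qed

lemma monic_irr_dvd_eq:
  fixes p a :: "'a::field poly"
  assumes "lead_coeff p = 1" "lead_coeff a = 1" "irreducible p" "irreducible a" "p dvd a"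
  shows "p = a"
proof -
  obtain k where k: "a = p * k" using assms(5) by blast
  have "\<not> p dvd 1" using assms(3) irreducible_not_unit by blast
  hence "k dvd 1" using irreducibleD[OF assms(4) k] by blast
  then obtain c where c0: "k = [:c:]" "c dvd 1" by (elim is_unit_polyE)
  hence c: "k = [:c:]" "c \<noteq> 0" by auto
  have "lead_coeff a = lead_coeff p * c" using k c by (simp add: lead_coeff_mult)
  hence "c = 1" using assms by simp
  thus ?thesis using k c by simp
qed

lemma prime_elem_dvd_prod_iff':
  fixes p :: "'a::field poly"
  assumes "prime_elem p" "finite A"
  shows "p dvd \<Prod>A \<Longrightarrow> \<exists>a\<in>A. p dvd a"
  using assms(2)
proof (induction A rule: finite_induct)
  case empty thus ?case using assms(1) by (simp add: prime_elem_def)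
next
  case (insert x A)
  hence "p dvd x * \<Prod>A" by simp
  hence "p dvd x \<or> p dvd \<Prod>A" using assms(1) prime_elem_dvd_mult_iff by blast
  thus ?case using insert by auto
qed

lemma prod_monic_irr_dvd:
  fixes f :: "'a::field poly"
  assumes "finite A" "\<forall>a\<in>A. lead_coeff a = 1 \<and> irreducible a \<and> a dvd f"
  shows "\<Prod>A dvd f"
  using assms
proof (induction A rule: finite_induct)
  case empty thus ?case by simp
next
  case (insert p A)
  from insert have IH: "\<Prod>A dvd f" by auto
  then obtain h where h: "f = \<Prod>A * h" by blast
  have pi: "lead_coeff p = 1" "irreducible p" "p dvd f" using insert by auto
  have pe: "prime_elem p" by (rule field_poly_irreducible_imp_prime[OF pi(2)])
  have "\<not> p dvd \<Prod>A"
  proof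
    assume "p dvd \<Prod>A"
    then obtain a where a: "a \<in> A" "p dvd a"
      using prime_elem_dvd_prod_iff'[OF pe insert(1)] by auto
    have "p = a" using monic_irr_dvd_eq[OF pi(1) _ pi(2) _ a(2)] insert(4) a(1) by auto
    thus False using a insert(2) by simp
  qed
  hence "p dvd h" using pi(3) h pe prime_elem_dvd_mult_iff by metis
  then obtain k where "h = p * k" by blast
  hence "f = (p * \<Prod>A) * k" using h by (simp add: ac_simps)
  thus ?case using insert by simp
qed

lemma exists_monic_irr_factor:
  fixes h :: "'a::field poly"
  shows "degree h > 0 \<Longrightarrow> \<exists>r. lead_coeff r = 1 \<and> irreducible r \<and> r dvd h"
proof (induction "degree h" arbitrary: h rule: less_induct)
  case less
  have h0: "h \<noteq> 0" using less(2) by auto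
  show ?case
  proof (cases "irreducible h")
    case True
    define r where "r = smult (inverse (lead_coeff h)) h"
    have lr: "lead_coeff r = 1" unfolding r_def using h0 by simp
    have "r = [:inverse (lead_coeff h):] * h" unfolding r_def by simp
    moreover have "is_unit [:inverse (lead_coeff h):]" using h0 by (simp add: is_unit_const_poly_iff dvd_field_iff)
    ultimately have "irreducible r" using True irreducible_mult_unit_left by metis
    moreover have "r dvd h"
    proof (rule dvdI)
      show "h = r * [:lead_coeff h:]" unfolding r_def using h0 by (simp add: mult.commute)
    qed
    ultimately show ?thesis using lr by blast
  next
    case False
    have nu: "\<not> h dvd 1" using less(2) h0 by (auto simp: is_unit_iff_degree)
    from False h0 nu obtain a b where ab: "h = a * b" "\<not> a dvd 1" "\<not> b dvd 1"
      unfolding irreducible_def by blast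
    have a0: "a \<noteq> 0" "b \<noteq> 0" using ab h0 by auto
    have da: "degree a > 0" using ab(2) a0 by (auto simp: is_unit_iff_degree)
    have db: "degree b > 0" using ab(3) a0 by (auto simp: is_unit_iff_degree)
    have "degree h = degree a + degree b" using ab a0 by (simp add: degree_mult_eq)
    hence "degree a < degree h" using db by simp
    from less(1)[OF this da] obtain r where "lead_coeff r = 1 \<and> irreducible r \<and> r dvd a" by blast
    thus ?thesis using ab(1) by auto
  qed
qed

lemma XN_props:
  assumes "N \<ge> 2"
  shows "degree ([:0,1:] ^ N - [:0,1:] :: 'b::comm_ring_1 poly) = N \<and> lead_coeff ([:0,1:] ^ N - [:0,1:] :: 'b poly) = 1"
proof -
  define P :: "'b poly" where "P = [:0,1:] ^ N - [:0,1:]"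
  have e: "P = monom 1 N - monom 1 1" unfolding P_def by (simp add: monom_altdef)
  have cP: "coeff P i = (if i = N then 1 else 0) - (if i = 1 then 1 else 0)" for i
    unfolding e by (simp add: coeff_monom)
  have dP: "degree P = N"
  proof (rule antisym)
    show "degree P \<le> N" by (rule degree_le) (use assms in \<open>auto simp: cP\<close>)
    show "N \<le> degree P" by (rule le_degree) (use assms in \<open>auto simp: cP\<close>)
  qed
  thus ?thesis using assms unfolding P_def[symmetric] by (simp add: cP)
qed

lemma sum_deg_small:
  assumes m: "m \<ge> 1"
  shows "card (UNIV :: 'a::{field,finite} set) ^ m \<le>
     (\<Sum>p\<in>{p :: 'a poly. lead_coeff p = 1 \<and> irreducible p \<and> degree p \<le> m}. degree p)"
proof -
  define q where "q = card (UNIV :: 'a set)"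
  define N where "N = q ^ m"
  define Sm where "Sm = {p :: 'a poly. lead_coeff p = 1 \<and> irreducible p \<and> degree p \<le> m}"
  define g :: "'a poly" where "g = [:0,1:] ^ N - [:0,1:]"
  define A where "A = {p. lead_coeff p = 1 \<and> irreducible p \<and> p dvd g}"
  have q2: "q \<ge> 2" using card_ge2[where 'a='a] unfolding q_def by auto
  have "q ^ 1 \<le> q ^ m" using m q2 by (intro power_increasing) auto
  hence N2: "N \<ge> 2" using q2 unfolding N_def by simp
  have dg: "degree g = N" and lg: "lead_coeff g = 1" using XN_props[OF N2, where 'b='a] unfolding g_def by auto
  have g0: "g \<noteq> 0" using lg by auto
  have ASm: "A \<subseteq> Sm" unfolding A_def Sm_def
    using irr_deg_bound[OF _ m] unfolding g_def N_def q_def by auto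
  have "Sm \<subseteq> lowp (Suc m)" unfolding Sm_def lowp_def
    by (auto intro: coeff_eq_0)
  hence finSm: "finite Sm" using card_lowp[of "Suc m", where 'a='a] finite_subset by blast
  hence finA: "finite A" using ASm finite_subset by blast
  have "\<Prod>A dvd g" by (rule prod_monic_irr_dvd[OF finA]) (auto simp: A_def)
  then obtain h where h: "g = \<Prod>A * h" by blast
  have h0: "h \<noteq> 0" using g0 h by auto
  have A0: "\<Prod>A \<noteq> 0" using g0 h by auto
  have ofN: "of_nat N = (0::'a)"
  proof -
    have "of_nat (q choose 1) = (0::'a)" using ff_choose_zero[of 1, where 'a='a] q2 unfolding q_def by simp
    hence "of_nat q = (0::'a)" by simp
    thus ?thesis unfolding N_def using m by (simp add: of_nat_power)
  qed
  have pd: "pderiv g = -1"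
    unfolding g_def by (simp add: pderiv_diff pderiv_power ofN pderiv_pCons) (metis minus_pCons minus_zero one_pCons)
  have dh: "degree h = 0"
  proof (rule ccontr)
    assume "degree h \<noteq> 0"
    then obtain r where r: "lead_coeff r = 1" "irreducible r" "r dvd h"
      using exists_monic_irr_factor by blast
    have "r dvd g" using r(3) h by simp
    hence "r \<in> A" using r unfolding A_def by simp
    hence "r dvd \<Prod>A" using finA by (intro dvd_prodI)
    hence "r * r dvd g" using r(3) h by (simp add: mult_dvd_mono)
    then obtain s where s: "g = r * r * s" by blast
    have "pderiv g = r * (r * pderiv s + s * pderiv r + s * pderiv r)"
      by (subst s) (simp add: pderiv_mult algebra_simps)
    hence "r dvd pderiv g" by simp
    hence "r dvd 1" using pd by simp
    thus False using r(2) irreducible_not_unit by blast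
  qed
  have "N = degree (\<Prod>A)" using dg h A0 h0 dh by (simp add: degree_mult_eq)
  also have "\<dots> = (\<Sum>p\<in>A. degree p)" by (rule degree_prod_eq_sum_degree) (auto simp: A_def)
  also have "\<dots> \<le> (\<Sum>p\<in>Sm. degree p)" by (rule sum_mono2[OF finSm ASm]) auto
  finally show ?thesis unfolding N_def q_def Sm_def .
qed

theorem lemma1:
  fixes f :: "'a::{field,finite} poly" and m :: nat
  assumes "f \<noteq> 0" and "m \<ge> 1" and "real (card (UNIV :: 'a set)) ^ m \<ge> real (degree f)"
  shows "E_fun f \<le> (\<Prod>p\<in>{p :: 'a poly. lead_coeff p = 1 \<and> irreducible p \<and> degree p \<le> m}. 1 + 1 / poly_norm p)"
proof -
  define q where "q = card (UNIV :: 'a set)"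
  define w where "w = (\<lambda>p::'a poly. 1 + 1 / poly_norm p)"
  define Sm where "Sm = {p :: 'a poly. lead_coeff p = 1 \<and> irreducible p \<and> degree p \<le> m}"
  define S where "S = {p :: 'a poly. lead_coeff p = 1 \<and> irreducible p \<and> p dvd f}"
  have q2: "q \<ge> 2" using card_ge2[where 'a='a] unfolding q_def by auto
  have w_def': "w p = 1 + 1 / real q ^ degree p" for p unfolding w_def poly_norm_def q_def by simp
  have w_ge: "w p \<ge> 1" for p unfolding w_def' by simp
  have w_mono: "w p \<le> w p'" if "degree p' \<le> degree p" for p p'
  proof -
    have "real q ^ degree p' \<le> real q ^ degree p" using q2 that by (intro power_increasing) auto
    moreover have "real q ^ degree p' > 0" using q2 by simp
    ultimately have "1 / real q ^ degree p \<le> 1 / real q ^ degree p'" using q2 by (intro divide_left_mono) auto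
    thus ?thesis unfolding w_def' by simp
  qed
  have "Sm \<subseteq> lowp (Suc m)" unfolding Sm_def lowp_def by (auto intro: coeff_eq_0)
  hence finSm: "finite Sm" using card_lowp[of "Suc m", where 'a='a] finite_subset by blast
  have "S \<subseteq> lowp (Suc (degree f))" unfolding S_def lowp_def
  proof (auto intro!: coeff_eq_0)
    fix p i assume "irreducible p" "p dvd f" "Suc (degree f) \<le> i"
    moreover have "degree p \<le> degree f" using dvd_imp_degree[of p f] assms(1) \<open>irreducible p\<close> \<open>p dvd f\<close>
      by (metis not_irreducible_zero)
    ultimately show "degree p < i" by simp
  qed
  hence finS: "finite S" using card_lowp[of "Suc (degree f)", where 'a='a] finite_subset by blast
  have S0: "\<forall>p\<in>S. p \<noteq> 0" unfolding S_def by auto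
  have sumS: "(\<Sum>p\<in>S. degree p) \<le> degree f"
  proof -
    have "\<Prod>S dvd f" by (rule prod_monic_irr_dvd[OF finS]) (auto simp: S_def)
    moreover have "\<Prod>S \<noteq> 0" using S0 finS by simp
    ultimately have "degree (\<Prod>S) \<le> degree f" using assms(1) dvd_imp_degree by blast
    moreover have "degree (\<Prod>S) = (\<Sum>p\<in>S. degree p)"
      using degree_prod_eq_sum_degree[of S "\<lambda>p. p"] S0 by simp
    ultimately show ?thesis by simp
  qed
  have df: "degree f \<le> q ^ m"
  proof -
    have "real (degree f) \<le> real (q ^ m)" using assms(3) unfolding q_def by simp
    thus ?thesis by linarith
  qed
  have sumSm: "q ^ m \<le> (\<Sum>p\<in>Sm. degree p)" using sum_deg_small[OF assms(2), where 'a='a]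
    unfolding q_def Sm_def .
  define S1 where "S1 = S \<inter> Sm"
  define S2 where "S2 = S - Sm"
  define T where "T = Sm - S"
  have e1: "(\<Sum>p\<in>S. degree p) = (\<Sum>p\<in>S1. degree p) + (\<Sum>p\<in>S2. degree p)"
    unfolding S1_def S2_def by (rule sum.Int_Diff[OF finS])
  have e2: "(\<Sum>p\<in>Sm. degree p) = (\<Sum>p\<in>S1. degree p) + (\<Sum>p\<in>T. degree p)"
    unfolding S1_def T_def using sum.Int_Diff[OF finSm, of degree S] by (simp add: Int_commute)
  have b1: "card S2 * Suc m \<le> (\<Sum>p\<in>S2. degree p)"
    using sum_bounded_below[of S2 "Suc m" degree] unfolding S2_def Sm_def S_def by force
  have b2: "(\<Sum>p\<in>T. degree p) \<le> card T * m"
    using sum_bounded_above[of T degree m] unfolding T_def Sm_def by force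
  have "card S2 * Suc m \<le> card T * m" using e1 e2 b1 b2 sumS df sumSm by linarith
  hence cST: "card S2 \<le> card T"
  proof -
    assume h: "card S2 * Suc m \<le> card T * m"
    show ?thesis
    proof (rule ccontr)
      assume "\<not> card S2 \<le> card T"
      hence "card T * m \<le> card S2 * m" by simp
      moreover have "card S2 * Suc m = card S2 * m + card S2" by simp
      ultimately show False using h \<open>\<not> card S2 \<le> card T\<close> by linarith
    qed
  qed
  have finS2: "finite S2" using finS unfolding S2_def by simp
  have finT: "finite T" using finSm unfolding T_def by simp
  obtain \<iota> where iota: "\<iota> ` S2 \<subseteq> T" "inj_on \<iota> S2" using card_le_inj[OF finS2 finT cST] by blast
  have "prod w S2 \<le> prod (w \<circ> \<iota>) S2"
  proof (rule prod_mono)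
    fix p assume p: "p \<in> S2"
    hence "\<iota> p \<in> T" using iota by auto
    hence "degree (\<iota> p) \<le> m" unfolding T_def Sm_def by simp
    moreover have "\<not> degree p \<le> m" using p unfolding S2_def Sm_def S_def by simp
    ultimately have "w p \<le> w (\<iota> p)" by (intro w_mono) simp
    thus "0 \<le> w p \<and> w p \<le> (w \<circ> \<iota>) p" using w_ge[of p] by simp
  qed
  also have "\<dots> = prod w (\<iota> ` S2)" by (rule prod.reindex[OF iota(2), symmetric])
  also have "\<dots> \<le> prod w T"
  proof -
    have "prod w T = prod w (T - \<iota> ` S2) * prod w (\<iota> ` S2)"
      by (rule prod.subset_diff[OF iota(1) finT])
    moreover have "prod w (T - \<iota> ` S2) \<ge> 1" using w_ge by (intro prod_ge_1) auto
    moreover have "prod w (\<iota> ` S2) \<ge> 0" using w_ge by (intro prod_nonneg) (auto intro: order_trans[OF zero_le_one])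
    ultimately show ?thesis by (metis mult_le_cancel_right1 order.strict_iff_not)
  qed
  finally have main: "prod w S2 \<le> prod w T" .
  have "E_fun f = prod w S" unfolding E_fun_def w_def S_def ..
  also have "\<dots> = prod w S1 * prod w S2" unfolding S1_def S2_def by (rule prod.Int_Diff[OF finS])
  also have "\<dots> \<le> prod w S1 * prod w T"
    using main w_ge by (intro mult_left_mono prod_nonneg) (auto intro: order_trans[OF zero_le_one])
  also have "\<dots> = prod w Sm"
    unfolding S1_def T_def using prod.Int_Diff[OF finSm, of w S] by (simp add: Int_commute)
  finally show ?thesis unfolding w_def Sm_def .
qed

end
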